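(* Let $K$ be a subcomplex of a simplicial complex $L$, and assume $K$ is balanced, with a fixed proper $(\dim K+1)$-coloring. Then there exists a complex $L'$ obtained from $L$ by a finite sequence of stellar subdivisions such that (i) $K$ is a subcomplex of $L'$, (ii) $L'$ is balanced, and (iii) there is a proper $(\dim L'+1)$-coloring of $L'$ extending the given coloring of $K$.
   Context: All simplicial complexes are finite abstract simplicial complexes. The stellar subdivision of $\Delta$ at a nonempty face $F$ is $\mathrm{sd}_F(\Delta)=\{G\in\Delta: F\not\subseteq G\}\cup(\overline{\{a\}}*\partial\overline{F}*\mathrm{lk}_\Delta(F))$, where $a$ is a new vertex, $\overline{F}$ is the simplex of all subsets of $F$, $\partial\overline{F}$ the complex of its proper subsets, $*$ the join, and $\mathrm{lk}_\Delta(F)=\{G\in\Delta: F\cap G=\emptyset, F\cup G\in\Delta\}$. A proper $m$-coloring maps vertices to $\{0,\dots,m-1\}$ with distinct colors on the endpoints of each edge; a $d$-dimensional complex is balanced if it has a proper $(d+1)$-coloring. *)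

theory Defs
  imports Main
begin

definition simplicial_complex :: "'a set set \<Rightarrow> bool" where
  "simplicial_complex \<Delta> \<longleftrightarrow> finite \<Delta> \<and> (\<forall>F\<in>\<Delta>. finite F) \<and> (\<forall>F\<in>\<Delta>. \<forall>G. G \<subseteq> F \<longrightarrow> G \<in> \<Delta>)"

definition vertices :: "'a set set \<Rightarrow> 'a set" where
  "vertices \<Delta> = \<Union>\<Delta>"

definition dim :: "'a set set \<Rightarrow> int" where
  "dim \<Delta> = (if \<Delta> = {} then -1 else Max ((\<lambda>F. int (card F)) ` \<Delta>) - 1)"

definition link :: "'a set set \<Rightarrow> 'a set \<Rightarrow> 'a set set" where
  "link \<Delta> F = {G \<in> \<Delta>. F \<inter> G = {} \<and> F \<union> G \<in> \<Delta>}"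

definition simplex :: "'a set \<Rightarrow> 'a set set" where
  "simplex F = Pow F"

definition boundary_simplex :: "'a set \<Rightarrow> 'a set set" where
  "boundary_simplex F = {G. G \<subset> F}"

definition join :: "'a set set \<Rightarrow> 'a set set \<Rightarrow> 'a set set" where
  "join \<Delta> \<Gamma> = {G \<union> H | G H. G \<in> \<Delta> \<and> H \<in> \<Gamma>}"

definition stellar :: "'a set set \<Rightarrow> 'a set \<Rightarrow> 'a \<Rightarrow> 'a set set" where
  "stellar \<Delta> F a = {G \<in> \<Delta>. \<not> F \<subseteq> G} \<union> join (join (simplex {a}) (boundary_simplex F)) (link \<Delta> F)"

definition stellar_step :: "'a set set \<Rightarrow> 'a set set \<Rightarrow> bool" where
  "stellar_step \<Delta> \<Delta>' \<longleftrightarrow> (\<exists>F a. F \<in> \<Delta> \<and> F \<noteq> {} \<and> a \<notin> vertices \<Delta> \<and> \<Delta>' = stellar \<Delta> F a)"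

definition proper_coloring :: "'a set set \<Rightarrow> nat \<Rightarrow> ('a \<Rightarrow> nat) \<Rightarrow> bool" where
  "proper_coloring \<Delta> m \<kappa> \<longleftrightarrow> (\<forall>v\<in>vertices \<Delta>. \<kappa> v < m) \<and>
     (\<forall>u v. {u, v} \<in> \<Delta> \<and> u \<noteq> v \<longrightarrow> \<kappa> u \<noteq> \<kappa> v)"

definition balanced :: "'a set set \<Rightarrow> bool" where
  "balanced \<Delta> \<longleftrightarrow> (\<exists>\<kappa>. proper_coloring \<Delta> (nat (dim \<Delta> + 1)) \<kappa>)"

end

theory Submission
  imports Defs "HOL-Library.Multiset"
begin

lemma sc_down: "simplicial_complex M \<Longrightarrow> \<sigma> \<in> M \<Longrightarrow> \<tau> \<subseteq> \<sigma> \<Longrightarrow> \<tau> \<in> M"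
  unfolding simplicial_complex_def by blast

lemma sc_fin: "simplicial_complex M \<Longrightarrow> \<sigma> \<in> M \<Longrightarrow> finite \<sigma>"
  unfolding simplicial_complex_def by blast

lemma stellar_mem: "\<sigma> \<in> stellar M e m \<longleftrightarrow> (\<sigma> \<in> M \<and> \<not> e \<subseteq> \<sigma>) \<or>
   (\<exists>X H G. X \<subseteq> {m} \<and> H \<subset> e \<and> G \<in> M \<and> e \<inter> G = {} \<and> e \<union> G \<in> M \<and> \<sigma> = X \<union> H \<union> G)"
  unfolding stellar_def join_def simplex_def boundary_simplex_def link_def
  apply (rule iffI)
   apply (simp only: Un_iff mem_Collect_eq)
   apply (elim disjE conjE exE; simp)
   apply blast
  apply (simp only: Un_iff mem_Collect_eq)
  apply (elim disjE conjE exE)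
   apply simp
  apply (rule disjI2)
  apply (intro exI conjI)
    prefer 3 apply simp apply assumption
  by auto

locale edge_sd =
  fixes M :: "'a set set" and e :: "'a set" and a b m :: 'a
  assumes sc: "simplicial_complex M" and eM: "e \<in> M" and e_def: "e = {a, b}"
    and ab: "a \<noteq> b" and mfresh: "m \<notin> vertices M"
begin

lemma m_notin: "\<sigma> \<in> M \<Longrightarrow> m \<notin> \<sigma>"
  using mfresh unfolding vertices_def by blast

lemma st_old: "\<sigma> \<in> M \<Longrightarrow> \<not> e \<subseteq> \<sigma> \<Longrightarrow> \<sigma> \<in> stellar M e m"
  by (simp add: stellar_mem)

lemma st_new: assumes "\<tau> \<in> M" "e \<subseteq> \<tau>" "a' \<in> e"
  shows "insert m (\<tau> - {a'}) \<in> stellar M e m"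
proof -
  have "\<tau> - e \<in> M" using sc_down[OF sc assms(1)] by blast
  moreover have "e \<union> (\<tau> - e) \<in> M" using assms by (simp add: Un_absorb1)
  moreover have "e - {a'} \<subset> e" using assms(3) by blast
  moreover have "insert m (\<tau> - {a'}) = {m} \<union> (e - {a'}) \<union> (\<tau> - e)" using assms by blast
  moreover have "e \<inter> (\<tau> - e) = {}" by blast
  ultimately show ?thesis unfolding stellar_mem
    apply -
    apply (rule disjI2)
    apply (rule exI[of _ "{m}"], rule exI[of _ "e - {a'}"], rule exI[of _ "\<tau> - e"])
    by (intro conjI; (assumption | simp))
qed

lemma st_nom: assumes "\<sigma> \<in> stellar M e m" "m \<notin> \<sigma>" shows "\<sigma> \<in> M \<and> \<not> e \<subseteq> \<sigma>"
  using assms(1) unfolding stellar_mem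
proof (elim disjE exE conjE)
  fix X H G assume h: "X \<subseteq> {m}" "H \<subset> e" "G \<in> M" "e \<inter> G = {}" "e \<union> G \<in> M" "\<sigma> = X \<union> H \<union> G"
  have X: "X = {}" using assms(2) h(1,6) by auto
  have "\<sigma> \<subseteq> e \<union> G" using h(2,6) X by auto
  then have "\<sigma> \<in> M" using sc_down[OF sc h(5)] by blast
  moreover have "\<not> e \<subseteq> \<sigma>"
  proof
    assume "e \<subseteq> \<sigma>"
    then have "e \<subseteq> H" using h(4,6) X by auto
    then show False using h(2) by auto
  qed
  ultimately show ?thesis by blast
qed simp

lemma st_m: assumes "\<sigma> \<in> stellar M e m" "m \<in> \<sigma>"
  shows "\<exists>\<tau>\<in>M. e \<subseteq> \<tau> \<and> (\<exists>a'\<in>e. \<sigma> \<subseteq> insert m (\<tau> - {a'}))"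
proof -
  have "\<not> (\<sigma> \<in> M)" using assms(2) m_notin by blast
  then obtain X H G where h: "X \<subseteq> {m}" "H \<subset> e" "G \<in> M" "e \<inter> G = {}" "e \<union> G \<in> M" "\<sigma> = X \<union> H \<union> G"
    using assms(1) unfolding stellar_mem by blast
  obtain a' where a': "a' \<in> e" "a' \<notin> H" using h(2) by blast
  have "\<sigma> \<subseteq> insert m ((e \<union> G) - {a'})" using h a' by blast
  then show ?thesis using h(5) a' by blast
qed

lemma e_notin: "e \<notin> stellar M e m"
proof
  assume "e \<in> stellar M e m"
  moreover have "m \<notin> e" using m_notin eM by blast
  ultimately show False using st_nom by blast
qed

lemma st_sc: "simplicial_complex (stellar M e m)"
proof -
  have fM: "finite M" using sc unfolding simplicial_complex_def by blast
  have fe: "finite e" using sc_fin[OF sc eM] .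
  have sub: "stellar M e m \<subseteq> M \<union> (\<lambda>(X,H,G). X \<union> H \<union> G) ` (Pow {m} \<times> Pow e \<times> M)"
  proof
    fix x assume "x \<in> stellar M e m"
    then show "x \<in> M \<union> (\<lambda>(X,H,G). X \<union> H \<union> G) ` (Pow {m} \<times> Pow e \<times> M)"
      unfolding stellar_mem
    proof (elim disjE exE conjE)
      fix X H G assume h: "X \<subseteq> {m}" "H \<subset> e" "G \<in> M" "e \<inter> G = {}" "e \<union> G \<in> M" "x = X \<union> H \<union> G"
      have "(X,H,G) \<in> Pow {m} \<times> Pow e \<times> M" using h by auto
      then have "x \<in> (\<lambda>(X,H,G). X \<union> H \<union> G) ` (Pow {m} \<times> Pow e \<times> M)"
        using h(6) by (auto intro: rev_image_eqI)
      then show ?thesis by blast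
    qed simp
  qed
  have "finite (stellar M e m)"
    by (rule finite_subset[OF sub]) (use fM fe in auto)
  moreover have "\<forall>F\<in>stellar M e m. finite F"
  proof
    fix F assume F: "F \<in> stellar M e m"
    show "finite F"
    proof (cases "m \<in> F")
      case True
      then obtain \<tau> a' where "\<tau> \<in> M" "F \<subseteq> insert m (\<tau> - {a'})" using st_m[OF F] by blast
      then show ?thesis using sc_fin[OF sc] finite_subset by blast
    next
      case False then show ?thesis using st_nom[OF F] sc_fin[OF sc] by blast
    qed
  qed
  moreover have "\<forall>F\<in>stellar M e m. \<forall>G. G \<subseteq> F \<longrightarrow> G \<in> stellar M e m"
  proof (intro ballI allI impI)
    fix F G assume F: "F \<in> stellar M e m" and GF: "G \<subseteq> F"
    show "G \<in> stellar M e m"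
      using F unfolding stellar_mem
    proof (elim disjE exE conjE)
      assume "F \<in> M" "\<not> e \<subseteq> F"
      then show "G \<in> M \<and> \<not> e \<subseteq> G \<or> (\<exists>X H G'. X \<subseteq> {m} \<and> H \<subset> e \<and> G' \<in> M \<and> e \<inter> G' = {} \<and> e \<union> G' \<in> M \<and> G = X \<union> H \<union> G')"
        using GF sc_down[OF sc] by blast
    next
      fix X H G' assume h: "X \<subseteq> {m}" "H \<subset> e" "G' \<in> M" "e \<inter> G' = {}" "e \<union> G' \<in> M" "F = X \<union> H \<union> G'"
      have 1: "G \<inter> G' \<in> M" by (rule sc_down[OF sc h(3)]) auto
      have 2: "e \<union> (G \<inter> G') \<in> M" by (rule sc_down[OF sc h(5)]) auto
      have 3: "G \<inter> H \<subset> e" using h(2) by auto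
      have 4: "G = (G \<inter> X) \<union> (G \<inter> H) \<union> (G \<inter> G')" using GF h(6) by auto
      have 5: "G \<inter> X \<subseteq> {m}" using h(1) by auto
      have 6: "e \<inter> (G \<inter> G') = {}" using h(4) by auto
      show "G \<in> M \<and> \<not> e \<subseteq> G \<or> (\<exists>X H G'. X \<subseteq> {m} \<and> H \<subset> e \<and> G' \<in> M \<and> e \<inter> G' = {} \<and> e \<union> G' \<in> M \<and> G = X \<union> H \<union> G')"
        apply (rule disjI2)
        apply (rule exI[of _ "G \<inter> X"], rule exI[of _ "G \<inter> H"], rule exI[of _ "G \<inter> G'"])
        by (intro conjI 1 2 3 4 5 6)
    qed
  qed
  ultimately show ?thesis unfolding simplicial_complex_def by blast
qed

lemma st_vertices: "vertices (stellar M e m) = insert m (vertices M)"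
proof
  show "vertices (stellar M e m) \<subseteq> insert m (vertices M)"
  proof
    fix v assume "v \<in> vertices (stellar M e m)"
    then obtain F where F: "F \<in> stellar M e m" "v \<in> F" unfolding vertices_def by blast
    show "v \<in> insert m (vertices M)"
    proof (cases "m \<in> F")
      case True
      then obtain \<tau> a' where "\<tau> \<in> M" "F \<subseteq> insert m (\<tau> - {a'})" using st_m[OF F(1)] by blast
      then show ?thesis using F(2) unfolding vertices_def by blast
    next
      case False then show ?thesis using st_nom[OF F(1)] F(2) unfolding vertices_def by blast
    qed
  qed
next
  have "insert m (e - {a}) \<in> stellar M e m" using st_new[OF eM order_refl, of a] e_def by simp
  then have "{m} \<in> stellar M e m" by (rule sc_down[OF st_sc]) auto
  moreover have "{v} \<in> stellar M e m" if "v \<in> vertices M" for v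
  proof -
    have "{v} \<in> M" using that sc_down[OF sc] unfolding vertices_def by blast
    moreover have "\<not> e \<subseteq> {v}" using e_def ab by blast
    ultimately show ?thesis by (rule st_old)
  qed
  ultimately show "insert m (vertices M) \<subseteq> vertices (stellar M e m)" unfolding vertices_def by blast
qed


lemma st_card: "\<forall>\<sigma>\<in>M. card \<sigma> \<le> n \<Longrightarrow> \<forall>\<sigma>\<in>stellar M e m. card \<sigma> \<le> n"
proof
  fix \<sigma> assume h: "\<forall>\<sigma>\<in>M. card \<sigma> \<le> n" and s: "\<sigma> \<in> stellar M e m"
  show "card \<sigma> \<le> n"
  proof (cases "m \<in> \<sigma>")
    case True
    then obtain \<tau> a' where t: "\<tau> \<in> M" "e \<subseteq> \<tau>" "a' \<in> e" "\<sigma> \<subseteq> insert m (\<tau> - {a'})" using st_m[OF s] by blast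
    have ft: "finite \<tau>" using sc_fin[OF sc t(1)] .
    have "card \<sigma> \<le> card (insert m (\<tau> - {a'}))" using t(4) ft by (intro card_mono) auto
    also have "\<dots> \<le> Suc (card (\<tau> - {a'}))" using card_insert_le_m1 ft
      by (simp add: card_insert_if)
    also have "\<dots> = card \<tau>" using t(2,3) ft
      by (metis card_Suc_Diff1 subsetD)
    finally show ?thesis using h t(1) by fastforce
  next
    case False then show ?thesis using st_nom[OF s] h by blast
  qed
qed

lemma st_wit: assumes "\<sigma>0 \<in> M" "card \<sigma>0 = n" shows "\<exists>\<sigma>\<in>stellar M e m. card \<sigma> = n"
proof (cases "e \<subseteq> \<sigma>0")
  case True
  have ea: "a \<in> e" using e_def by simp
  have "insert m (\<sigma>0 - {a}) \<in> stellar M e m" using st_new[OF assms(1) True ea] .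
  moreover have "card (insert m (\<sigma>0 - {a})) = n"
  proof -
    have ft: "finite \<sigma>0" using sc_fin[OF sc assms(1)] .
    have "m \<notin> \<sigma>0 - {a}" using m_notin[OF assms(1)] by blast
    then have "card (insert m (\<sigma>0 - {a})) = Suc (card (\<sigma>0 - {a}))" using ft by simp
    also have "\<dots> = card \<sigma>0" using True ea ft by (metis card_Suc_Diff1 subsetD)
    finally show ?thesis using assms(2) by simp
  qed
  ultimately show ?thesis by blast
next
  case False then show ?thesis using st_old assms by blast
qed

lemma st_K: assumes "simplicial_complex K" "K \<subseteq> M" "e \<notin> K" shows "K \<subseteq> stellar M e m"
proof
  fix \<sigma> assume s: "\<sigma> \<in> K"
  have "\<not> e \<subseteq> \<sigma>" using sc_down[OF assms(1) s] assms(3) by blast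
  then show "\<sigma> \<in> stellar M e m" using st_old s assms(2) by blast
qed

lemma st_edge_old: "{u,v} \<in> M \<Longrightarrow> {u,v} \<noteq> e \<Longrightarrow> {u,v} \<in> stellar M e m"
  by (rule st_old) (use e_def ab in auto)

lemma transfer:
  assumes "a \<in> C" "b \<in> C" "\<psi> a = \<psi> b" "e \<subseteq> \<sigma>'" "a' \<in> e"
    and "\<forall>f\<in>F. \<exists>y\<in>\<sigma>'. y \<in> C \<and> \<psi> y = f"
  shows "\<forall>f\<in>F. \<exists>y\<in>insert m (\<sigma>' - {a'}). y \<in> C \<and> \<psi> y = f"
proof
  fix f assume "f \<in> F"
  then obtain y where y: "y \<in> \<sigma>'" "y \<in> C" "\<psi> y = f" using assms(6) by blast
  show "\<exists>y\<in>insert m (\<sigma>' - {a'}). y \<in> C \<and> \<psi> y = f"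
  proof (cases "y = a'")
    case False then show ?thesis using y by blast
  next
    case True
    show ?thesis
    proof (cases "a' = a")
      case True
      then show ?thesis using assms e_def ab y \<open>y = a'\<close> by (intro bexI[of _ b]) auto
    next
      case False
      then have "a' = b" using assms(5) e_def by blast
      then show ?thesis using assms e_def ab y \<open>y = a'\<close> by (intro bexI[of _ a]) auto
    qed
  qed
qed

end


definition monoE :: "'a set set \<Rightarrow> 'a set \<Rightarrow> ('a \<Rightarrow> nat) \<Rightarrow> 'a set set" where
  "monoE M C \<psi> = {e \<in> M. \<exists>u v. e = {u,v} \<and> u \<noteq> v \<and> u \<in> C \<and> v \<in> C \<and> \<psi> u = \<psi> v}"

definition lv :: "nat \<Rightarrow> ('a \<Rightarrow> nat set) \<Rightarrow> 'a \<Rightarrow> nat" where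
  "lv n Fb x = 2 * (n - card (Fb x))"

definition lev :: "nat \<Rightarrow> ('a \<Rightarrow> nat set) \<Rightarrow> 'a set \<Rightarrow> nat" where
  "lev n Fb e = Min (lv n Fb ` e) - 1"

definition mu :: "nat \<Rightarrow> 'a set set \<Rightarrow> 'a set \<Rightarrow> ('a \<Rightarrow> nat) \<Rightarrow> ('a \<Rightarrow> nat set) \<Rightarrow> nat multiset" where
  "mu n M C \<psi> Fb = image_mset (lv n Fb) (mset_set (vertices M - C)) + image_mset (lev n Fb) (mset_set (monoE M C \<psi>))"

definition invS :: "nat \<Rightarrow> 'a set set \<Rightarrow> 'a set set \<Rightarrow> 'a set \<Rightarrow> ('a \<Rightarrow> nat) \<Rightarrow> ('a \<Rightarrow> nat set) \<Rightarrow> bool" where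
  "invS n K M C \<psi> Fb \<longleftrightarrow> simplicial_complex M \<and> simplicial_complex K \<and> K \<subseteq> M \<and>
     (\<forall>\<sigma>\<in>M. card \<sigma> \<le> n) \<and> (\<exists>\<sigma>\<in>M. card \<sigma> = n) \<and> C \<subseteq> vertices M \<and>
     (\<forall>x\<in>C. \<psi> x < n \<and> \<psi> x \<notin> Fb x) \<and> (\<forall>x. finite (Fb x)) \<and>
     (\<forall>u v. {u,v} \<in> K \<longrightarrow> u \<noteq> v \<longrightarrow> u \<in> C \<and> v \<in> C \<and> \<psi> u \<noteq> \<psi> v) \<and>
     (\<forall>x\<in>vertices M. \<forall>\<sigma>\<in>M. x \<in> \<sigma> \<longrightarrow> (\<exists>\<sigma>'\<in>M. \<sigma> \<subseteq> \<sigma>' \<and> (\<forall>f\<in>Fb x. \<exists>y\<in>\<sigma>'. y \<in> C \<and> \<psi> y = f)))"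

lemma vertices_finite: "simplicial_complex M \<Longrightarrow> finite (vertices M)"
  unfolding simplicial_complex_def vertices_def by blast

lemma vert_single: "simplicial_complex M \<Longrightarrow> x \<in> vertices M \<Longrightarrow> {x} \<in> M"
  unfolding vertices_def using sc_down by blast

lemma invD: assumes "invS n K M C \<psi> Fb"
  shows "simplicial_complex M" "simplicial_complex K" "K \<subseteq> M" "\<forall>\<sigma>\<in>M. card \<sigma> \<le> n"
    "\<exists>\<sigma>\<in>M. card \<sigma> = n" "C \<subseteq> vertices M" "\<forall>x\<in>C. \<psi> x < n \<and> \<psi> x \<notin> Fb x"
    "\<forall>x. finite (Fb x)" "\<forall>u v. {u,v} \<in> K \<longrightarrow> u \<noteq> v \<longrightarrow> u \<in> C \<and> v \<in> C \<and> \<psi> u \<noteq> \<psi> v"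
    "\<forall>x\<in>vertices M. \<forall>\<sigma>\<in>M. x \<in> \<sigma> \<longrightarrow> (\<exists>\<sigma>'\<in>M. \<sigma> \<subseteq> \<sigma>' \<and> (\<forall>f\<in>Fb x. \<exists>y\<in>\<sigma>'. y \<in> C \<and> \<psi> y = f))"
  using assms unfolding invS_def by simp_all

lemma invD6: assumes "invS n K M C \<psi> Fb" "x \<in> vertices M" "\<sigma> \<in> M" "x \<in> \<sigma>"
  obtains \<sigma>' where "\<sigma>' \<in> M" "\<sigma> \<subseteq> \<sigma>'" "\<forall>f\<in>Fb x. \<exists>y\<in>\<sigma>'. y \<in> C \<and> \<psi> y = f"
proof -
  have "\<exists>\<sigma>'\<in>M. \<sigma> \<subseteq> \<sigma>' \<and> (\<forall>f\<in>Fb x. \<exists>y\<in>\<sigma>'. y \<in> C \<and> \<psi> y = f)"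
    using invD(10)[OF assms(1)] assms(2-4) by blast
  then show ?thesis using that by blast
qed

lemma Fb_bound:
  assumes I: "invS n K M C \<psi> Fb" and x: "x \<in> vertices M"
  shows "card (Fb x) < n"
proof -
  have sc: "simplicial_complex M" using invD(1)[OF I] .
  have "{x} \<in> M" using vert_single[OF sc x] .
  then obtain \<sigma>' where s: "\<sigma>' \<in> M" "{x} \<subseteq> \<sigma>'" "\<forall>f\<in>Fb x. \<exists>y\<in>\<sigma>'. y \<in> C \<and> \<psi> y = f"
    using invD6[OF I x] by blast
  have nx: "x \<in> C \<Longrightarrow> \<psi> x \<notin> Fb x" using invD(7)[OF I] by blast
  have fs: "finite \<sigma>'" using sc_fin[OF sc s(1)] .
  have "Fb x \<subseteq> \<psi> ` (\<sigma>' - {x})"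
  proof
    fix f assume f: "f \<in> Fb x"
    then obtain y where y: "y \<in> \<sigma>'" "y \<in> C" "\<psi> y = f" using s(3) by blast
    have "y \<noteq> x" using nx f y by blast
    then show "f \<in> \<psi> ` (\<sigma>' - {x})" using y by blast
  qed
  then have "card (Fb x) \<le> card (\<psi> ` (\<sigma>' - {x}))" using fs by (intro card_mono) auto
  also have "\<dots> \<le> card (\<sigma>' - {x})" by (rule card_image_le) (use fs in auto)
  also have "\<dots> < card \<sigma>'" using fs s(2) by (intro psubset_card_mono) auto
  also have "\<dots> \<le> n" using invD(4)[OF I] s(1) by blast
  finally show ?thesis .
qed

lemma mono_finite: "simplicial_complex M \<Longrightarrow> finite (monoE M C \<psi>)"
  unfolding monoE_def simplicial_complex_def by auto

lemma lev_pair: "lev n Fb {u,v} = min (lv n Fb u) (lv n Fb v) - 1"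
  unfolding lev_def by simp

lemma step_color:
  assumes I: "invS n K M C \<psi> Fb" and u: "u \<in> vertices M" "u \<notin> C"
  shows "\<exists>c. invS n K M (insert u C) (\<psi>(u := c)) Fb \<and>
     (mu n M (insert u C) (\<psi>(u := c)) Fb, mu n M C \<psi> Fb) \<in> mult less_than \<and>
     (\<forall>x\<in>C. (\<psi>(u:=c)) x = \<psi> x)"
proof -
  have sc: "simplicial_complex M" using invD(1)[OF I] .
  have cu: "card (Fb u) < n" using Fb_bound[OF I u(1)] .
  have fu: "finite (Fb u)" using invD(8)[OF I] by blast
  have "\<not> {..<n} \<subseteq> Fb u"
  proof
    assume "{..<n} \<subseteq> Fb u"
    then have "card {..<n} \<le> card (Fb u)" using fu by (rule card_mono[rotated])
    then show False using cu by simp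
  qed
  then obtain c where c: "c < n" "c \<notin> Fb u" by auto
  define C' where "C' = insert u C"
  define \<psi>' where "\<psi>' = \<psi>(u := c)"
  have agree: "\<forall>x\<in>C. \<psi>' x = \<psi> x" using u(2) unfolding \<psi>'_def by auto
  have I': "invS n K M C' \<psi>' Fb"
    unfolding invS_def
  proof (intro conjI)
    show "simplicial_complex M" "simplicial_complex K" "K \<subseteq> M" "\<forall>\<sigma>\<in>M. card \<sigma> \<le> n"
      "\<exists>\<sigma>\<in>M. card \<sigma> = n" "\<forall>x. finite (Fb x)" using invD[OF I] by simp_all
    show "C' \<subseteq> vertices M" using invD(6)[OF I] u unfolding C'_def by blast
    show "\<forall>x\<in>C'. \<psi>' x < n \<and> \<psi>' x \<notin> Fb x" using invD(7)[OF I] c agree unfolding C'_def \<psi>'_def by auto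
    show "\<forall>u v. {u,v} \<in> K \<longrightarrow> u \<noteq> v \<longrightarrow> u \<in> C' \<and> v \<in> C' \<and> \<psi>' u \<noteq> \<psi>' v"
    proof (intro allI impI)
      fix x y assume "{x,y} \<in> K" "x \<noteq> y"
      then have "x \<in> C" "y \<in> C" "\<psi> x \<noteq> \<psi> y" using invD(9)[OF I] by blast+
      then show "x \<in> C' \<and> y \<in> C' \<and> \<psi>' x \<noteq> \<psi>' y" using agree unfolding C'_def by simp
    qed
    show "\<forall>x\<in>vertices M. \<forall>\<sigma>\<in>M. x \<in> \<sigma> \<longrightarrow> (\<exists>\<sigma>'\<in>M. \<sigma> \<subseteq> \<sigma>' \<and> (\<forall>f\<in>Fb x. \<exists>y\<in>\<sigma>'. y \<in> C' \<and> \<psi>' y = f))"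
    proof (intro ballI impI)
      fix x \<sigma> assume h: "x \<in> vertices M" "\<sigma> \<in> M" "x \<in> \<sigma>"
      obtain \<sigma>' where s: "\<sigma>' \<in> M" "\<sigma> \<subseteq> \<sigma>'" "\<forall>f\<in>Fb x. \<exists>y\<in>\<sigma>'. y \<in> C \<and> \<psi> y = f"
        using invD6[OF I h] .
      have "\<forall>f\<in>Fb x. \<exists>y\<in>\<sigma>'. y \<in> C' \<and> \<psi>' y = f"
      proof
        fix f assume "f \<in> Fb x"
        then obtain y where "y \<in> \<sigma>'" "y \<in> C" "\<psi> y = f" using s(3) by blast
        then show "\<exists>y\<in>\<sigma>'. y \<in> C' \<and> \<psi>' y = f" using agree unfolding C'_def by auto
      qed
      then show "\<exists>\<sigma>'\<in>M. \<sigma> \<subseteq> \<sigma>' \<and> (\<forall>f\<in>Fb x. \<exists>y\<in>\<sigma>'. y \<in> C' \<and> \<psi>' y = f)"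
        using s(1,2) by blast
    qed
  qed
  have fv: "finite (vertices M)" using vertices_finite[OF sc] .
  have fm: "finite (monoE M C' \<psi>')" using mono_finite[OF sc] .
  have eqold: "monoE M C \<psi> = {e \<in> monoE M C' \<psi>'. u \<notin> e}"
  proof
    show "monoE M C \<psi> \<subseteq> {e \<in> monoE M C' \<psi>'. u \<notin> e}"
      using u(2) agree unfolding monoE_def C'_def by fastforce
    show "{e \<in> monoE M C' \<psi>'. u \<notin> e} \<subseteq> monoE M C \<psi>"
      using agree unfolding monoE_def C'_def by fastforce
  qed
  have split: "monoE M C' \<psi>' = monoE M C \<psi> \<union> {e \<in> monoE M C' \<psi>'. u \<in> e}"
    using eqold by blast
  have disj: "monoE M C \<psi> \<inter> {e \<in> monoE M C' \<psi>'. u \<in> e} = {}" using eqold by blast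
  define A where "A = image_mset (lv n Fb) (mset_set (vertices M - C'))"
  define B where "B = image_mset (lev n Fb) (mset_set (monoE M C \<psi>))"
  define N where "N = image_mset (lev n Fb) (mset_set {e \<in> monoE M C' \<psi>'. u \<in> e})"
  have vs: "vertices M - C = insert u (vertices M - C')" using u unfolding C'_def by blast
  have "mset_set (vertices M - C) = add_mset u (mset_set (vertices M - C'))"
    unfolding vs using fv by (subst mset_set.insert) (auto simp: C'_def)
  then have m1: "mu n M C \<psi> Fb = (A + B) + {#lv n Fb u#}"
    unfolding mu_def A_def B_def by simp
  have "mset_set (monoE M C' \<psi>') = mset_set (monoE M C \<psi>) + mset_set {e \<in> monoE M C' \<psi>'. u \<in> e}"
    by (subst split, rule mset_set_Union) (use fm disj mono_finite[OF sc, of C \<psi>] in auto)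
  then have m2: "mu n M C' \<psi>' Fb = (A + B) + N"
    unfolding mu_def A_def B_def N_def by simp
  have "\<forall>k\<in>#N. \<exists>j\<in>#{#lv n Fb u#}. (k, j) \<in> less_than"
  proof
    fix k assume "k \<in># N"
    then obtain e where e: "e \<in> monoE M C' \<psi>'" "u \<in> e" "k = lev n Fb e"
      unfolding N_def using fm by auto
    have fe: "finite e" using e(1) sc_fin[OF sc] unfolding monoE_def by blast
    have "Min (lv n Fb ` e) \<le> lv n Fb u" using fe e(2) by (intro Min_le) auto
    moreover have "lv n Fb u \<ge> 2" using cu unfolding lv_def by simp
    ultimately have "k < lv n Fb u" using e(3) unfolding lev_def by simp
    then show "\<exists>j\<in>#{#lv n Fb u#}. (k, j) \<in> less_than" by simp
  qed
  then have "(mu n M C' \<psi>' Fb, mu n M C \<psi> Fb) \<in> mult less_than"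
    unfolding m1 m2 by (intro one_step_implies_mult) auto
  then show ?thesis using I' agree unfolding C'_def \<psi>'_def by blast
qed


lemma (in edge_sd) mono_st: "m \<notin> C \<Longrightarrow> monoE (stellar M e m) C \<psi> = monoE M C \<psi> - {e}"
proof
  assume mC: "m \<notin> C"
  show "monoE (stellar M e m) C \<psi> \<subseteq> monoE M C \<psi> - {e}"
  proof
    fix e' assume "e' \<in> monoE (stellar M e m) C \<psi>"
    then obtain u v where h: "e' \<in> stellar M e m" "e' = {u,v}" "u \<noteq> v" "u \<in> C" "v \<in> C" "\<psi> u = \<psi> v"
      unfolding monoE_def by blast
    have "m \<notin> e'" using h mC by blast
    then have "e' \<in> M" using st_nom[OF h(1)] by blast
    moreover have "e' \<noteq> e" using h(1) e_notin by blast
    ultimately show "e' \<in> monoE M C \<psi> - {e}" using h unfolding monoE_def by blast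
  qed
  show "monoE M C \<psi> - {e} \<subseteq> monoE (stellar M e m) C \<psi>"
  proof
    fix e' assume "e' \<in> monoE M C \<psi> - {e}"
    then obtain u v where h: "e' \<in> M" "e' \<noteq> e" "e' = {u,v}" "u \<noteq> v" "u \<in> C" "v \<in> C" "\<psi> u = \<psi> v"
      unfolding monoE_def by blast
    have "e' \<in> stellar M e m" using st_edge_old h(1-3) by blast
    then show "e' \<in> monoE (stellar M e m) C \<psi>" using h unfolding monoE_def by blast
  qed
qed

lemma (in edge_sd) inv6_st:
  assumes I: "invS n K M C \<psi> Fb" and abC: "a \<in> C" "b \<in> C" "\<psi> a = \<psi> b"
    and Fb'_def: "Fb' = Fb(m := insert (\<psi> a) (Fb a))"
    and x: "x \<in> vertices (stellar M e m)" and s: "\<sigma> \<in> stellar M e m" "x \<in> \<sigma>"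
  shows "\<exists>\<sigma>'\<in>stellar M e m. \<sigma> \<subseteq> \<sigma>' \<and> (\<forall>f\<in>Fb' x. \<exists>y\<in>\<sigma>'. y \<in> C \<and> \<psi> y = f)"
proof (cases "x = m")
  case True
  then have ms: "m \<in> \<sigma>" using s by simp
  obtain \<tau> a' where t: "\<tau> \<in> M" "e \<subseteq> \<tau>" "a' \<in> e" "\<sigma> \<subseteq> insert m (\<tau> - {a'})" using st_m[OF s(1) ms] by blast
  have aV: "a \<in> vertices M" using eM e_def unfolding vertices_def by blast
  have "a \<in> \<tau>" using t(2) e_def by blast
  then obtain \<sigma>' where s': "\<sigma>' \<in> M" "\<tau> \<subseteq> \<sigma>'" "\<forall>f\<in>Fb a. \<exists>y\<in>\<sigma>'. y \<in> C \<and> \<psi> y = f"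
    using invD6[OF I aV t(1)] by blast
  have "\<forall>f\<in>insert (\<psi> a) (Fb a). \<exists>y\<in>\<sigma>'. y \<in> C \<and> \<psi> y = f"
    using s'(3) abC(1) \<open>a \<in> \<tau>\<close> s'(2) by blast
  then have "\<forall>f\<in>insert (\<psi> a) (Fb a). \<exists>y\<in>insert m (\<sigma>' - {a'}). y \<in> C \<and> \<psi> y = f"
    using transfer[OF abC _ t(3)] s'(2) t(2) by blast
  moreover have "insert m (\<sigma>' - {a'}) \<in> stellar M e m" using st_new s'(1) s'(2) t(2,3) by blast
  moreover have "\<sigma> \<subseteq> insert m (\<sigma>' - {a'})" using t(4) s'(2) by blast
  ultimately show ?thesis using True Fb'_def by auto
next
  case False
  then have Fx: "Fb' x = Fb x" using Fb'_def by simp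
  have xV: "x \<in> vertices M" using x False st_vertices by blast
  show ?thesis
  proof (cases "m \<in> \<sigma>")
    case True
    obtain \<tau> a' where t: "\<tau> \<in> M" "e \<subseteq> \<tau>" "a' \<in> e" "\<sigma> \<subseteq> insert m (\<tau> - {a'})" using st_m[OF s(1) True] by blast
    have "x \<in> \<tau>" using t(4) s(2) False by blast
    then obtain \<sigma>' where s': "\<sigma>' \<in> M" "\<tau> \<subseteq> \<sigma>'" "\<forall>f\<in>Fb x. \<exists>y\<in>\<sigma>'. y \<in> C \<and> \<psi> y = f"
      using invD6[OF I xV t(1)] by blast
    have "\<forall>f\<in>Fb x. \<exists>y\<in>insert m (\<sigma>' - {a'}). y \<in> C \<and> \<psi> y = f"
      using transfer[OF abC _ t(3) s'(3)] s'(2) t(2) by blast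
    moreover have "insert m (\<sigma>' - {a'}) \<in> stellar M e m" using st_new s'(1) s'(2) t(2,3) by blast
    moreover have "\<sigma> \<subseteq> insert m (\<sigma>' - {a'})" using t(4) s'(2) by blast
    ultimately show ?thesis using Fx by auto
  next
    case False
    have sM: "\<sigma> \<in> M" "\<not> e \<subseteq> \<sigma>" using st_nom[OF s(1) False] by auto
    obtain \<sigma>' where s': "\<sigma>' \<in> M" "\<sigma> \<subseteq> \<sigma>'" "\<forall>f\<in>Fb x. \<exists>y\<in>\<sigma>'. y \<in> C \<and> \<psi> y = f"
      using invD6[OF I xV sM(1) s(2)] by blast
    show ?thesis
    proof (cases "e \<subseteq> \<sigma>'")
      case False
      then show ?thesis using st_old[OF s'(1) False] s' Fx by auto
    next
      case True
      obtain a' where a': "a' \<in> e" "a' \<notin> \<sigma>" using sM(2) by blast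
      have "\<forall>f\<in>Fb x. \<exists>y\<in>insert m (\<sigma>' - {a'}). y \<in> C \<and> \<psi> y = f"
        using transfer[OF abC True a'(1) s'(3)] .
      moreover have "insert m (\<sigma>' - {a'}) \<in> stellar M e m" using st_new s'(1) True a'(1) by blast
      moreover have "\<sigma> \<subseteq> insert m (\<sigma>' - {a'})" using a'(2) s'(2) by blast
      ultimately show ?thesis using Fx by auto
    qed
  qed
qed

lemma step_sub:
  fixes M :: "'a set set"
  assumes inf: "infinite (UNIV::'a set)" and I: "invS n K M C \<psi> Fb" and eMo: "e \<in> monoE M C \<psi>"
  shows "\<exists>M' Fb'. stellar_step M M' \<and> invS n K M' C \<psi> Fb' \<and> (mu n M' C \<psi> Fb', mu n M C \<psi> Fb) \<in> mult less_than"
proof -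
  have sc: "simplicial_complex M" using invD(1)[OF I] .
  obtain p q where pq: "e \<in> M" "e = {p,q}" "p \<noteq> q" "p \<in> C" "q \<in> C" "\<psi> p = \<psi> q"
    using eMo unfolding monoE_def by blast
  define a where "a = (if lv n Fb p \<le> lv n Fb q then p else q)"
  define b where "b = (if lv n Fb p \<le> lv n Fb q then q else p)"
  have abh: "e = {a,b}" "a \<noteq> b" "a \<in> C" "b \<in> C" "\<psi> a = \<psi> b" "lv n Fb a \<le> lv n Fb b"
    using pq unfolding a_def b_def by auto
  obtain m where m: "m \<notin> vertices M" using ex_new_if_finite[OF inf vertices_finite[OF sc]] by blast
  interpret edge_sd M e a b m using sc pq(1) abh(1,2) m by unfold_locales
  define Fb' where "Fb' = Fb(m := insert (\<psi> a) (Fb a))"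
  have mC: "m \<notin> C" using m invD(6)[OF I] by blast
  have eK: "e \<notin> K"
  proof
    assume "e \<in> K"
    then show False using invD(9)[OF I] pq by blast
  qed
  have step: "stellar_step M (stellar M e m)"
    unfolding stellar_step_def using pq(1,2) m by blast
  have agreeFb: "\<forall>x\<in>vertices M. Fb' x = Fb x" using m Fb'_def by auto
  have I': "invS n K (stellar M e m) C \<psi> Fb'"
    unfolding invS_def
  proof (intro conjI)
    show "simplicial_complex (stellar M e m)" by (rule st_sc)
    show "simplicial_complex K" using invD(2)[OF I] .
    show "K \<subseteq> stellar M e m" using st_K invD(2,3)[OF I] eK by blast
    show "\<forall>\<sigma>\<in>stellar M e m. card \<sigma> \<le> n" using st_card invD(4)[OF I] by blast
    show "\<exists>\<sigma>\<in>stellar M e m. card \<sigma> = n" using st_wit invD(5)[OF I] by blast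
    show "C \<subseteq> vertices (stellar M e m)" using invD(6)[OF I] st_vertices by blast
    show "\<forall>x\<in>C. \<psi> x < n \<and> \<psi> x \<notin> Fb' x" using invD(7)[OF I] mC Fb'_def by auto
    show "\<forall>x. finite (Fb' x)" using invD(8)[OF I] Fb'_def by auto
    show "\<forall>u v. {u,v} \<in> K \<longrightarrow> u \<noteq> v \<longrightarrow> u \<in> C \<and> v \<in> C \<and> \<psi> u \<noteq> \<psi> v" using invD(9)[OF I] .
    show "\<forall>x\<in>vertices (stellar M e m). \<forall>\<sigma>\<in>stellar M e m. x \<in> \<sigma> \<longrightarrow>
        (\<exists>\<sigma>'\<in>stellar M e m. \<sigma> \<subseteq> \<sigma>' \<and> (\<forall>f\<in>Fb' x. \<exists>y\<in>\<sigma>'. y \<in> C \<and> \<psi> y = f))"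
      using inv6_st[OF I abh(3,4,5) Fb'_def] by blast
  qed
  have fv: "finite (vertices M)" using vertices_finite[OF sc] .
  have fmo: "finite (monoE M C \<psi>)" using mono_finite[OF sc] .
  define A where "A = image_mset (lv n Fb) (mset_set (vertices M - C))"
  define B where "B = image_mset (lev n Fb) (mset_set (monoE M C \<psi> - {e}))"
  have "mset_set (monoE M C \<psi>) = add_mset e (mset_set (monoE M C \<psi> - {e}))"
    using fmo eMo by (rule mset_set.remove)
  then have m1: "mu n M C \<psi> Fb = (A + B) + {#lev n Fb e#}"
    unfolding mu_def A_def B_def by simp
  have vs: "vertices (stellar M e m) - C = insert m (vertices M - C)" using st_vertices mC by blast
  have "mset_set (vertices (stellar M e m) - C) = add_mset m (mset_set (vertices M - C))"
    unfolding vs using fv m by (subst mset_set.insert) auto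
  moreover have "image_mset (lv n Fb') (mset_set (vertices M - C)) = A"
    unfolding A_def using fv agreeFb by (intro image_mset_cong) (auto simp: lv_def)
  moreover have "image_mset (lev n Fb') (mset_set (monoE M C \<psi> - {e})) = B"
    unfolding B_def
  proof (intro image_mset_cong)
    fix e' assume "e' \<in># mset_set (monoE M C \<psi> - {e})"
    then have "e' \<in> M" using fmo unfolding monoE_def by auto
    then have "\<forall>x\<in>e'. x \<in> vertices M" unfolding vertices_def by blast
    then have "lv n Fb' ` e' = lv n Fb ` e'" using agreeFb unfolding lv_def by auto
    then show "lev n Fb' e' = lev n Fb e'" unfolding lev_def by simp
  qed
  ultimately have m2: "mu n (stellar M e m) C \<psi> Fb' = (A + B) + {#lv n Fb' m#}"
    unfolding mu_def mono_st[OF mC] by simp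
  have cb: "card (Fb a) < n" using Fb_bound[OF I] abh(3) invD(6)[OF I] by blast
  have fa: "finite (Fb a)" using invD(8)[OF I] by blast
  have na: "\<psi> a \<notin> Fb a" using invD(7)[OF I] abh(3) by blast
  have "lv n Fb' m = 2 * (n - Suc (card (Fb a)))" unfolding lv_def Fb'_def using fa na by simp
  moreover have "lev n Fb e = 2 * (n - card (Fb a)) - 1"
    unfolding abh(1) lev_pair using abh(6) unfolding lv_def by simp
  ultimately have "lv n Fb' m < lev n Fb e" using cb by simp
  then have "(mu n (stellar M e m) C \<psi> Fb', mu n M C \<psi> Fb) \<in> mult less_than"
    unfolding m1 m2 by (intro one_step_implies_mult) auto
  then show ?thesis using step I' by blast
qed


definition good :: "nat \<Rightarrow> 'a set set \<Rightarrow> 'a set set \<Rightarrow> 'a set \<Rightarrow> ('a \<Rightarrow> nat) \<Rightarrow> bool" where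
  "good n K M C \<psi> \<longleftrightarrow> (\<exists>M' \<psi>'. stellar_step\<^sup>*\<^sup>* M M' \<and> K \<subseteq> M' \<and> finite M' \<and>
     (\<forall>\<sigma>\<in>M'. card \<sigma> \<le> n) \<and> (\<exists>\<sigma>\<in>M'. card \<sigma> = n) \<and> (\<forall>v\<in>vertices M'. \<psi>' v < n) \<and>
     (\<forall>u v. {u,v} \<in> M' \<and> u \<noteq> v \<longrightarrow> \<psi>' u \<noteq> \<psi>' v) \<and> (\<forall>x\<in>C. \<psi>' x = \<psi> x))"

lemma good_mono:
  assumes "good n K M C' \<psi>'" "C \<subseteq> C'" "\<forall>x\<in>C. \<psi>' x = \<psi> x"
  shows "good n K M C \<psi>"
proof -
  obtain M' \<psi>'' where g: "stellar_step\<^sup>*\<^sup>* M M'" "K \<subseteq> M'" "finite M'"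
     "\<forall>\<sigma>\<in>M'. card \<sigma> \<le> n" "\<exists>\<sigma>\<in>M'. card \<sigma> = n" "\<forall>v\<in>vertices M'. \<psi>'' v < n"
     "\<forall>u v. {u,v} \<in> M' \<and> u \<noteq> v \<longrightarrow> \<psi>'' u \<noteq> \<psi>'' v" "\<forall>x\<in>C'. \<psi>'' x = \<psi>' x"
    using assms(1) unfolding good_def by blast
  have "\<forall>x\<in>C. \<psi>'' x = \<psi> x" using g(8) assms(2,3) by auto
  then show ?thesis unfolding good_def
    by (intro exI[of _ M'] exI[of _ \<psi>''] conjI g(1-7))
qed

lemma good_step:
  assumes "stellar_step M M1" "good n K M1 C \<psi>"
  shows "good n K M C \<psi>"
proof -
  obtain M' \<psi>'' where g: "stellar_step\<^sup>*\<^sup>* M1 M'" "K \<subseteq> M'" "finite M'"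
     "\<forall>\<sigma>\<in>M'. card \<sigma> \<le> n" "\<exists>\<sigma>\<in>M'. card \<sigma> = n" "\<forall>v\<in>vertices M'. \<psi>'' v < n"
     "\<forall>u v. {u,v} \<in> M' \<and> u \<noteq> v \<longrightarrow> \<psi>'' u \<noteq> \<psi>'' v" "\<forall>x\<in>C. \<psi>'' x = \<psi> x"
    using assms(2) unfolding good_def by blast
  have "stellar_step\<^sup>*\<^sup>* M M'" using assms(1) g(1) by (rule converse_rtranclp_into_rtranclp)
  then show ?thesis unfolding good_def
    by (intro exI[of _ M'] exI[of _ \<psi>''] conjI g(2-8))
qed

lemma main_aux:
  fixes K :: "'a set set"
  assumes inf: "infinite (UNIV::'a set)"
  shows "\<forall>M C \<psi> Fb. mu n M C \<psi> Fb = X \<longrightarrow> invS n K M C \<psi> Fb \<longrightarrow> good n K M C \<psi>"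
proof (induction X rule: wf_induct_rule[OF wf_mult[OF wf_less_than]])
  case (1 X)
  show ?case
  proof (intro allI impI)
    fix M :: "'a set set" and C \<psi> Fb
    assume muX: "mu n M C \<psi> Fb = X" and I: "invS n K M C \<psi> Fb"
    show "good n K M C \<psi>"
    proof (cases "vertices M - C = {}")
      case False
      then obtain u where u: "u \<in> vertices M" "u \<notin> C" by blast
      obtain c where c: "invS n K M (insert u C) (\<psi>(u := c)) Fb"
        "(mu n M (insert u C) (\<psi>(u := c)) Fb, mu n M C \<psi> Fb) \<in> mult less_than"
        "\<forall>x\<in>C. (\<psi>(u:=c)) x = \<psi> x"
        using step_color[OF I u] by blast
      have "good n K M (insert u C) (\<psi>(u := c))"
        using 1[OF c(2)[unfolded muX], rule_format, OF refl c(1)] .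
      then show ?thesis by (rule good_mono[OF _ subset_insertI c(3)])
    next
      case True
      show ?thesis
      proof (cases "monoE M C \<psi> = {}")
        case False
        then obtain e where e: "e \<in> monoE M C \<psi>" by blast
        obtain M1 Fb' where s: "stellar_step M M1" "invS n K M1 C \<psi> Fb'"
          "(mu n M1 C \<psi> Fb', mu n M C \<psi> Fb) \<in> mult less_than"
          using step_sub[OF inf I e] by blast
        have "good n K M1 C \<psi>" using 1[OF s(3)[unfolded muX], rule_format, OF refl s(2)] .
        then show ?thesis using s(1) good_step by blast
      next
        case mE: True
        have f: "finite M" using invD(1)[OF I] unfolding simplicial_complex_def by blast
        have v: "\<forall>v\<in>vertices M. \<psi> v < n" using True invD(7)[OF I] by blast
        have ed: "\<forall>u v. {u,v} \<in> M \<and> u \<noteq> v \<longrightarrow> \<psi> u \<noteq> \<psi> v"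
        proof (intro allI impI)
          fix u v assume h: "{u,v} \<in> M \<and> u \<noteq> v"
          then have "u \<in> C" "v \<in> C" using True unfolding vertices_def by blast+
          then show "\<psi> u \<noteq> \<psi> v" using h mE unfolding monoE_def by blast
        qed
        show ?thesis unfolding good_def
          by (intro exI[of _ M] exI[of _ \<psi>] conjI rtranclp.rtrancl_refl f v ed invD(3,4,5)[OF I] ballI refl)
      qed
    qed
  qed
qed

theorem corollary3p2:
  fixes K L :: "'a set set" and \<kappa> :: "'a \<Rightarrow> nat"
  assumes "infinite (UNIV :: 'a set)"
    and "simplicial_complex L" and "simplicial_complex K" and "K \<subseteq> L"
    and "proper_coloring K (nat (dim K + 1)) \<kappa>"
  shows "\<exists>L' \<kappa>'. stellar_step\<^sup>*\<^sup>* L L' \<and> K \<subseteq> L' \<and> balanced L' \<and>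
           proper_coloring L' (nat (dim L' + 1)) \<kappa>' \<and> (\<forall>v\<in>vertices K. \<kappa>' v = \<kappa> v)"
proof (cases "L = {}")
  case True
  then have K0: "K = {}" using assms(4) by blast
  have "proper_coloring L (nat (dim L + 1)) \<kappa>" using True unfolding proper_coloring_def vertices_def by simp
  then have "balanced L" unfolding balanced_def by blast
  moreover have "stellar_step\<^sup>*\<^sup>* L L" by simp
  moreover have "\<forall>v\<in>vertices K. \<kappa> v = \<kappa> v" by simp
  ultimately show ?thesis using \<open>proper_coloring L (nat (dim L + 1)) \<kappa>\<close> assms(4)
    by (intro exI[of _ L] exI[of _ \<kappa>] conjI) assumption+
next
  case False
  have fL: "finite L" using assms(2) unfolding simplicial_complex_def by blast
  define D where "D = Max ((\<lambda>F. int (card F)) ` L)"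
  have "D \<in> (\<lambda>F. int (card F)) ` L" unfolding D_def using fL False by (intro Max_in) auto
  then obtain \<sigma>0 where s0: "\<sigma>0 \<in> L" "D = int (card \<sigma>0)" by blast
  define n where "n = nat (dim L + 1)"
  have dL: "dim L = D - 1" unfolding dim_def D_def using False by simp
  have nD: "n = card \<sigma>0" unfolding n_def dL s0(2) by simp
  have bound: "\<forall>\<sigma>\<in>L. card \<sigma> \<le> n"
  proof
    fix \<sigma> assume "\<sigma> \<in> L"
    then have "int (card \<sigma>) \<le> D" unfolding D_def using fL by (intro Max_ge) auto
    then show "card \<sigma> \<le> n" using nD s0(2) by simp
  qed
  have pc: "\<forall>v\<in>vertices K. \<kappa> v < nat (dim K + 1)" "\<forall>u v. {u,v} \<in> K \<and> u \<noteq> v \<longrightarrow> \<kappa> u \<noteq> \<kappa> v"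
    using assms(5) unfolding proper_coloring_def by blast+
  have colK: "\<kappa> v < n" if v: "v \<in> vertices K" for v
  proof -
    have Kne: "K \<noteq> {}" using v unfolding vertices_def by blast
    have fK: "finite K" using assms(3) unfolding simplicial_complex_def by blast
    have "Max ((\<lambda>F. int (card F)) ` K) \<in> (\<lambda>F. int (card F)) ` K" using fK Kne by (intro Max_in) auto
    then obtain \<sigma>1 where s1: "\<sigma>1 \<in> K" "Max ((\<lambda>F. int (card F)) ` K) = int (card \<sigma>1)" by auto
    have "dim K + 1 = int (card \<sigma>1)" unfolding dim_def using Kne s1(2) by simp
    moreover have "card \<sigma>1 \<le> n" using bound s1(1) assms(4) by blast
    ultimately have "nat (dim K + 1) \<le> n" by simp
    then show ?thesis using pc(1) v by fastforce
  qed
  have vKL: "vertices K \<subseteq> vertices L" using assms(4) unfolding vertices_def by blast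
  have I: "invS n K L (vertices K) \<kappa> (\<lambda>_. {})"
    unfolding invS_def
  proof (intro conjI)
    show "\<exists>\<sigma>\<in>L. card \<sigma> = n" using s0(1) nD by blast
    show "\<forall>x\<in>vertices K. \<kappa> x < n \<and> \<kappa> x \<notin> {}" using colK by blast
    show "\<forall>u v. {u,v} \<in> K \<longrightarrow> u \<noteq> v \<longrightarrow> u \<in> vertices K \<and> v \<in> vertices K \<and> \<kappa> u \<noteq> \<kappa> v"
      using pc(2) unfolding vertices_def by blast
    show "\<forall>x\<in>vertices L. \<forall>\<sigma>\<in>L. x \<in> \<sigma> \<longrightarrow> (\<exists>\<sigma>'\<in>L. \<sigma> \<subseteq> \<sigma>' \<and> (\<forall>f\<in>{}. \<exists>y\<in>\<sigma>'. y \<in> vertices K \<and> \<kappa> y = f))"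
      by blast
    show "simplicial_complex L" using assms(2) .
    show "simplicial_complex K" using assms(3) .
    show "K \<subseteq> L" using assms(4) .
    show "\<forall>\<sigma>\<in>L. card \<sigma> \<le> n" using bound .
    show "vertices K \<subseteq> vertices L" using vKL .
    show "\<forall>x. finite ({}::nat set)" by simp
  qed
  obtain L' \<kappa>' where g: "stellar_step\<^sup>*\<^sup>* L L'" "K \<subseteq> L'" "finite L'"
     "\<forall>\<sigma>\<in>L'. card \<sigma> \<le> n" "\<exists>\<sigma>\<in>L'. card \<sigma> = n" "\<forall>v\<in>vertices L'. \<kappa>' v < n"
     "\<forall>u v. {u,v} \<in> L' \<and> u \<noteq> v \<longrightarrow> \<kappa>' u \<noteq> \<kappa>' v" "\<forall>x\<in>vertices K. \<kappa>' x = \<kappa> x"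
  proof -
    have "good n K L (vertices K) \<kappa>" using main_aux[OF assms(1), rule_format, OF refl I] .
    then show ?thesis unfolding good_def using that by blast
  qed
  obtain \<sigma>2 where s2: "\<sigma>2 \<in> L'" "card \<sigma>2 = n" using g(5) by blast
  have L'ne: "L' \<noteq> {}" using s2 by blast
  have "Max ((\<lambda>F. int (card F)) ` L') = int n"
    using g(3,4) s2 by (intro Max_eqI) auto
  then have "nat (dim L' + 1) = n" unfolding dim_def using L'ne by simp
  then have pc': "proper_coloring L' (nat (dim L' + 1)) \<kappa>'"
    unfolding proper_coloring_def using g(6,7) by simp
  have bal: "balanced L'" unfolding balanced_def using pc' by blast
  show ?thesis
    apply (rule exI[of _ L'], rule exI[of _ \<kappa>'])
    apply (intro conjI)
        apply (rule g(1))
       apply (rule g(2))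
      apply (rule bal)
     apply (rule pc')
    apply (rule g(8))
    done
qed

end
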